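(* Consider a cache network as described below, with caching gain $f(\mathbf{x})=\mathbb{E}_{z\sim P}[h(g_z(\mathbf{0}))-h(g_z(\mathbf{x}))]$ where $h(s)=s/(1-s)$. Let $\hat h^L(s)=\sum_{\ell=1}^L s^\ell$ be the $L$-th order Taylor polynomial of $h$ around $0$, let $f_z(\mathbf{x})=h(g_z(\mathbf{0}))-h(g_z(\mathbf{x}))$ and $\hat f_z^L(\mathbf{x})=\hat h^L(g_z(\mathbf{0}))-\hat h^L(g_z(\mathbf{x}))$, and let $\widehat{\nabla G_z^L}$ be the polynomial estimator built from $\hat f_z^L$ (used in Stochastic Continuous Greedy). Let $\bar s<1$ be the largest load among all edges when caches are empty, $\bar s=\max_z g_z(\mathbf{0})$. Then $$\big\|\nabla G_z(\mathbf{y})-\widehat{\nabla G_z^L}(\mathbf{y})\big\|_2\le2\sqrt{|V||\mathcal{C}|}\,\frac{\bar s^{L+1}}{1-\bar s}.$$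
   Context: Cache network: directed graph $(V,E)$, catalog of items $\mathcal{C}$, service rates $\mu_{(u,v)}>0$ for edges, a set of requests $\mathcal{R}$; each request $r$ has an item $i^r\in\mathcal{C}$, an arrival rate $\lambda^r>0$, and a path $p^r=(p^r_1,p^r_2,\dots)$ of nodes; $k_{p^r}(v)$ is the position of node $v$ on $p^r$. Caching decisions are $\mathbf{x}\in\{0,1\}^{|V||\mathcal{C}|}$, $x_{v,i}=1$ iff item $i$ is stored at node $v$. Edges are indexed by $z=(u,v)\in E$, drawn according to a distribution $P$, with load $g_{(u,v)}(\mathbf{x})=\frac{1}{\mu_{(u,v)}}\sum_{r\in\mathcal{R}:(v,u)\in p^r}\lambda^r\prod_{k'=1}^{k_{p^r}(v)}\big(1-x_{p^r_{k'},i^r}\big)$, assumed $<1$ when caches are empty. $G_z(\mathbf{y})=\mathbb{E}_{\mathbf{x}\sim\mathbf{y}}[f_z(\mathbf{x})]$ (independent Bernoulli$(y_{v,i})$ coordinates) is the multilinear relaxation. For a polynomial, its multilinearization $\dot p$ replaces every positive exponent by $1$; the polynomial estimator has coordinates $\dot{\hat f}{}_z^L([\mathbf{y}]_{+j})-\dot{\hat f}{}_z^L([\mathbf{y}]_{-j})$, where $[\mathbf{y}]_{\pm j}$ sets coordinate $j$ to $1$/$0$. *)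

theory Defs
  imports "HOL-Analysis.Analysis" "HOL-Library.Poly_Mapping"
begin

(* Multivariate real polynomials in variables of type 'j, represented as
   finitely supported maps from monomials (exponent vectors 'j =>0 nat) to
   real coefficients; ring operations are those of HOL-Library.Poly_Mapping. *)
type_synonym 'j mpoly = "('j \<Rightarrow>\<^sub>0 nat) \<Rightarrow>\<^sub>0 real"

definition mp_const :: "real \<Rightarrow> 'j mpoly" where
  "mp_const c = Poly_Mapping.single 0 c"

definition mp_var :: "'j \<Rightarrow> 'j mpoly" where
  "mp_var j = Poly_Mapping.single (Poly_Mapping.single j 1) 1"

definition mp_eval :: "'j mpoly \<Rightarrow> ('j \<Rightarrow> real) \<Rightarrow> real" where
  "mp_eval p y = (\<Sum>m\<in>Poly_Mapping.keys p. Poly_Mapping.lookup p m *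
                    (\<Prod>j\<in>Poly_Mapping.keys m. y j ^ Poly_Mapping.lookup m j))"

(* evaluation of the multilinearization p-dot of p at y: every positive
   exponent is replaced by 1 *)
definition mp_mlin_eval :: "'j mpoly \<Rightarrow> ('j \<Rightarrow> real) \<Rightarrow> real" where
  "mp_mlin_eval p y = (\<Sum>m\<in>Poly_Mapping.keys p. Poly_Mapping.lookup p m *
                    (\<Prod>j\<in>Poly_Mapping.keys m. y j))"

definition on_path :: "'v list \<Rightarrow> 'v \<times> 'v \<Rightarrow> bool" where
  "on_path p e = (\<exists>k. Suc k < length p \<and> (p ! k, p ! Suc k) = e)"

(* 0-based position of node v on pth p; the paper's k_p(v) equals pos p v + 1 *)
definition pos :: "'v list \<Rightarrow> 'v \<Rightarrow> nat" where
  "pos p v = (LEAST k. k < length p \<and> p ! k = v)"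

(* load of edge (u,v) under caching vector x (x_{(w,i)} = 1 iff item i cached at w):
   g_{(u,v)}(x) = 1/mu_{(u,v)} * sum_{r: (v,u) in p^r} lambda^r prod_{k'=1}^{k_{p^r}(v)} (1 - x_{p^r_k', i^r}) *)
definition load ::
  "'r set \<Rightarrow> ('r \<Rightarrow> 'c) \<Rightarrow> ('r \<Rightarrow> real) \<Rightarrow> ('r \<Rightarrow> 'v list) \<Rightarrow> ('v \<times> 'v \<Rightarrow> real)
   \<Rightarrow> 'v \<times> 'v \<Rightarrow> ('v \<times> 'c \<Rightarrow> real) \<Rightarrow> real" where
  "load R item lam pth mu z x =
     (case z of (u, v) \<Rightarrow>
       (1 / mu (u, v)) * (\<Sum>r\<in>{r\<in>R. on_path (pth r) (v, u)}.
          lam r * (\<Prod>k'\<in>{0..pos (pth r) v}. 1 - x (pth r ! k', item r))))"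

definition load_poly ::
  "'r set \<Rightarrow> ('r \<Rightarrow> 'c) \<Rightarrow> ('r \<Rightarrow> real) \<Rightarrow> ('r \<Rightarrow> 'v list) \<Rightarrow> ('v \<times> 'v \<Rightarrow> real)
   \<Rightarrow> 'v \<times> 'v \<Rightarrow> ('v \<times> 'c) mpoly" where
  "load_poly R item lam pth mu z =
     (case z of (u, v) \<Rightarrow>
       (\<Sum>r\<in>{r\<in>R. on_path (pth r) (v, u)}.
          mp_const (lam r / mu (u, v)) *
          (\<Prod>k'\<in>{0..pos (pth r) v}. 1 - mp_var (pth r ! k', item r))))"

definition h :: "real \<Rightarrow> real" where
  "h s = s / (1 - s)"

definition h_hat :: "nat \<Rightarrow> real \<Rightarrow> real" where
  "h_hat L s = (\<Sum>l=1..L. s ^ l)"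

definition f_z ::
  "'r set \<Rightarrow> ('r \<Rightarrow> 'c) \<Rightarrow> ('r \<Rightarrow> real) \<Rightarrow> ('r \<Rightarrow> 'v list) \<Rightarrow> ('v \<times> 'v \<Rightarrow> real)
   \<Rightarrow> 'v \<times> 'v \<Rightarrow> ('v \<times> 'c \<Rightarrow> real) \<Rightarrow> real" where
  "f_z R item lam pth mu z x =
     h (load R item lam pth mu z (\<lambda>_. 0)) - h (load R item lam pth mu z x)"

definition f_hat_poly ::
  "'r set \<Rightarrow> ('r \<Rightarrow> 'c) \<Rightarrow> ('r \<Rightarrow> real) \<Rightarrow> ('r \<Rightarrow> 'v list) \<Rightarrow> ('v \<times> 'v \<Rightarrow> real)
   \<Rightarrow> nat \<Rightarrow> 'v \<times> 'v \<Rightarrow> ('v \<times> 'c) mpoly" where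
  "f_hat_poly R item lam pth mu L z =
     mp_const (h_hat L (load R item lam pth mu z (\<lambda>_. 0)))
     - (\<Sum>l=1..L. (load_poly R item lam pth mu z) ^ l)"

(* multilinear relaxation: expectation of F(x) where x_j ~ Bernoulli(y_j)
   independently for j \<in> J (x = indicator of the set S of ones) *)
definition multilin_rel :: "'j set \<Rightarrow> (('j \<Rightarrow> real) \<Rightarrow> real) \<Rightarrow> ('j \<Rightarrow> real) \<Rightarrow> real" where
  "multilin_rel J F y =
     (\<Sum>S\<in>Pow J. (\<Prod>j\<in>S. y j) * (\<Prod>j\<in>J - S. 1 - y j) *
                 F (\<lambda>j. if j \<in> S then 1 else 0))"

definition partial :: "(('j \<Rightarrow> real) \<Rightarrow> real) \<Rightarrow> 'j \<Rightarrow> ('j \<Rightarrow> real) \<Rightarrow> real" where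
  "partial G j y = deriv (\<lambda>t. G (y(j := t))) (y j)"

end

theory Submission
  imports Defs
begin

definition mv :: "('j \<Rightarrow> real) \<Rightarrow> ('j \<Rightarrow>\<^sub>0 nat) \<Rightarrow> real" where
  "mv x m = (\<Prod>j\<in>Poly_Mapping.keys m. x j ^ Poly_Mapping.lookup m j)"

lemma mv_superset: "finite A \<Longrightarrow> Poly_Mapping.keys m \<subseteq> A \<Longrightarrow>
   mv x m = (\<Prod>j\<in>A. x j ^ Poly_Mapping.lookup m j)"
  unfolding mv_def by (rule prod.mono_neutral_left) (auto simp: in_keys_iff)

lemma mv_add: "mv x (a + b) = mv x a * mv x b"
proof -
  let ?A = "Poly_Mapping.keys a \<union> Poly_Mapping.keys b"
  have "mv x (a+b) = (\<Prod>j\<in>?A. x j ^ Poly_Mapping.lookup (a+b) j)"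
    by (rule mv_superset) (auto dest: set_mp[OF keys_add])
  also have "\<dots> = (\<Prod>j\<in>?A. x j ^ Poly_Mapping.lookup a j) * (\<Prod>j\<in>?A. x j ^ Poly_Mapping.lookup b j)"
    by (simp add: lookup_add power_add prod.distrib)
  also have "\<dots> = mv x a * mv x b"
    using mv_superset[of ?A a x] mv_superset[of ?A b x] by simp
  finally show ?thesis .
qed

lemma mv_zero[simp]: "mv x 0 = 1" by (simp add: mv_def)

lemma mp_eval_superset: "finite A \<Longrightarrow> Poly_Mapping.keys p \<subseteq> A \<Longrightarrow>
   mp_eval p x = (\<Sum>m\<in>A. Poly_Mapping.lookup p m * mv x m)"
  unfolding mp_eval_def mv_def[symmetric] by (rule sum.mono_neutral_left) (auto simp: in_keys_iff)

lemma mp_eval_add: "mp_eval (p + q) x = mp_eval p x + mp_eval q x"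
proof -
  let ?A = "Poly_Mapping.keys p \<union> Poly_Mapping.keys q"
  have "mp_eval (p+q) x = (\<Sum>m\<in>?A. Poly_Mapping.lookup (p+q) m * mv x m)"
    by (rule mp_eval_superset) (auto dest: set_mp[OF keys_add])
  also have "\<dots> = (\<Sum>m\<in>?A. Poly_Mapping.lookup p m * mv x m) + (\<Sum>m\<in>?A. Poly_Mapping.lookup q m * mv x m)"
    by (simp add: lookup_add distrib_right sum.distrib)
  finally show ?thesis using mp_eval_superset[of ?A p x] mp_eval_superset[of ?A q x] by simp
qed

lemma mp_eval_zero[simp]: "mp_eval 0 x = 0" by (simp add: mp_eval_def)

lemma mp_eval_uminus: "mp_eval (- p) x = - mp_eval p x"
  by (simp add: mp_eval_def lookup_uminus sum_negf)

lemma mp_eval_diff: "mp_eval (p - q) x = mp_eval p x - mp_eval q x"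
  using mp_eval_add[of p "-q" x] by (simp add: mp_eval_uminus)

lemma mp_eval_sum: "mp_eval (sum f A) x = (\<Sum>a\<in>A. mp_eval (f a) x)"
  by (induction A rule: infinite_finite_induct) (auto simp: mp_eval_add)

lemma mp_eval_single: "mp_eval (Poly_Mapping.single a c) x = c * mv x a"
  by (simp add: mp_eval_def mv_def)

lemma pm_decomp: "p = (\<Sum>a\<in>Poly_Mapping.keys p. Poly_Mapping.single a (Poly_Mapping.lookup p a))"
proof (rule poly_mapping_eqI)
  fix k
  show "Poly_Mapping.lookup p k = Poly_Mapping.lookup (\<Sum>a\<in>Poly_Mapping.keys p. Poly_Mapping.single a (Poly_Mapping.lookup p a)) k"
    by (simp add: lookup_sum lookup_single when_def in_keys_iff)
qed

lemma mp_eval_mult: "mp_eval (p * q) x = mp_eval p x * mp_eval q x"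
proof -
  let ?P = "Poly_Mapping.keys p" and ?Q = "Poly_Mapping.keys q"
  have "p * q = (\<Sum>a\<in>?P. Poly_Mapping.single a (Poly_Mapping.lookup p a)) * (\<Sum>b\<in>?Q. Poly_Mapping.single b (Poly_Mapping.lookup q b))"
    using pm_decomp[of p, symmetric] pm_decomp[of q, symmetric] by (simp only:)
  also have "\<dots> = (\<Sum>a\<in>?P. \<Sum>b\<in>?Q. Poly_Mapping.single (a+b) (Poly_Mapping.lookup p a * Poly_Mapping.lookup q b))"
    by (simp add: sum_distrib_left sum_distrib_right mult_single) (rule sum.swap)
  finally have "mp_eval (p*q) x = (\<Sum>a\<in>?P. \<Sum>b\<in>?Q. Poly_Mapping.lookup p a * Poly_Mapping.lookup q b * mv x (a+b))"
    by (simp add: mp_eval_sum mp_eval_single)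
  also have "\<dots> = (\<Sum>a\<in>?P. Poly_Mapping.lookup p a * mv x a) * (\<Sum>b\<in>?Q. Poly_Mapping.lookup q b * mv x b)"
    unfolding sum_product by (intro sum.cong refl) (simp add: mv_add mult_ac)
  finally show ?thesis unfolding mp_eval_def mv_def .
qed

lemma mp_eval_one[simp]: "mp_eval 1 x = 1"
  by (simp add: mp_eval_def)

lemma mp_eval_const[simp]: "mp_eval (mp_const c) x = c"
  by (simp add: mp_const_def mp_eval_single)

lemma mp_eval_var[simp]: "mp_eval (mp_var j) x = x j"
  by (simp add: mp_var_def mp_eval_single mv_def)

lemma mp_eval_power: "mp_eval (p ^ n) x = mp_eval p x ^ n"
  by (induction n) (auto simp: mp_eval_mult)

lemma mp_eval_prod: "mp_eval (prod f A) x = (\<Prod>a\<in>A. mp_eval (f a) x)"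
  by (induction A rule: infinite_finite_induct) (auto simp: mp_eval_mult)

definition vin :: "'j set \<Rightarrow> 'j mpoly \<Rightarrow> bool" where
  "vin J p = (\<forall>m\<in>Poly_Mapping.keys p. Poly_Mapping.keys m \<subseteq> J)"

lemma vin_add: "vin J p \<Longrightarrow> vin J q \<Longrightarrow> vin J (p + q)"
  unfolding vin_def using keys_add[of p q] by (meson UnE subsetD)
lemma vin_diff: "vin J p \<Longrightarrow> vin J q \<Longrightarrow> vin J (p - q)"
  unfolding vin_def using keys_diff[of p q] by (meson UnE subsetD)
lemma vin_mult: assumes "vin J p" "vin J q" shows "vin J (p * q)"
  unfolding vin_def
proof
  fix m assume "m \<in> Poly_Mapping.keys (p * q)"
  then obtain a b where ab: "m = a + b" "a \<in> Poly_Mapping.keys p" "b \<in> Poly_Mapping.keys q"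
    using keys_mult[of p q] by blast
  have "Poly_Mapping.keys m \<subseteq> Poly_Mapping.keys a \<union> Poly_Mapping.keys b"
    unfolding ab(1) by (rule keys_add)
  also have "\<dots> \<subseteq> J" using assms ab unfolding vin_def by blast
  finally show "Poly_Mapping.keys m \<subseteq> J" .
qed
lemma vin_one: "vin J 1" by (simp add: vin_def)
lemma vin_zero: "vin J 0" by (simp add: vin_def)
lemma vin_const: "vin J (mp_const c)" by (simp add: vin_def mp_const_def)
lemma vin_var: "j \<in> J \<Longrightarrow> vin J (mp_var j)" by (simp add: vin_def mp_var_def)
lemma vin_power: "vin J p \<Longrightarrow> vin J (p ^ n)"
  by (induction n) (auto simp: vin_one vin_mult)
lemma vin_sum: "(\<And>a. a \<in> A \<Longrightarrow> vin J (f a)) \<Longrightarrow> vin J (sum f A)"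
  by (induction A rule: infinite_finite_induct) (auto simp: vin_zero vin_add)
lemma vin_prod: "(\<And>a. a \<in> A \<Longrightarrow> vin J (f a)) \<Longrightarrow> vin J (prod f A)"
  by (induction A rule: infinite_finite_induct) (auto simp: vin_one vin_mult)

definition ind :: "'j set \<Rightarrow> 'j \<Rightarrow> real" where
  "ind S = (\<lambda>j. if j \<in> S then 1 else 0)"

lemma prod_ind: "finite K \<Longrightarrow> (\<Prod>j\<in>K. (if j \<in> S then 1 else 0::real)) = (if K \<subseteq> S then 1 else 0)"
  by (induction K rule: finite_induct) auto

lemma mv_ind: "mv (\<lambda>j. if j \<in> S then 1 else 0) m = (if Poly_Mapping.keys m \<subseteq> S then 1 else 0)"
proof -
  have "mv (\<lambda>j. if j \<in> S then 1 else 0) m = (\<Prod>j\<in>Poly_Mapping.keys m. (if j \<in> S then 1 else 0::real))"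
    unfolding mv_def by (rule prod.cong) (auto simp: in_keys_iff)
  then show ?thesis by (simp add: prod_ind)
qed

lemma key_identity:
  fixes y :: "'j \<Rightarrow> real"
  assumes "finite J" "K \<subseteq> J"
  shows "(\<Sum>S\<in>Pow J. (\<Prod>j\<in>S. y j) * (\<Prod>j\<in>J - S. 1 - y j) * (if K \<subseteq> S then 1 else 0))
         = (\<Prod>j\<in>K. y j)"
proof -
  define b where "b i = (if i \<in> K then 0 else 1 - y i)" for i
  have fK: "finite K" using assms finite_subset by blast
  have 1: "(\<Prod>j\<in>J - S. b j) = (if K \<subseteq> S then (\<Prod>j\<in>J - S. 1 - y j) else 0)" if "S \<in> Pow J" for S
  proof (cases "K \<subseteq> S")
    case True
    then show ?thesis by (auto simp: b_def intro!: prod.cong)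
  next
    case False
    then obtain k where "k \<in> K" "k \<notin> S" by blast
    then have "k \<in> J - S" "b k = 0" using assms by (auto simp: b_def)
    then show ?thesis using False assms by (auto intro: prod_zero)
  qed
  have "(\<Prod>j\<in>J. y j + b j) = (\<Sum>S\<in>Pow J. (\<Prod>j\<in>S. y j) * (\<Prod>j\<in>J - S. b j))"
    by (rule prod_add) (rule assms)
  also have "\<dots> = (\<Sum>S\<in>Pow J. (\<Prod>j\<in>S. y j) * (\<Prod>j\<in>J - S. 1 - y j) * (if K \<subseteq> S then 1 else 0))"
    by (rule sum.cong) (auto simp: 1)
  finally have "(\<Sum>S\<in>Pow J. (\<Prod>j\<in>S. y j) * (\<Prod>j\<in>J - S. 1 - y j) * (if K \<subseteq> S then 1 else 0))
      = (\<Prod>j\<in>J. y j + b j)" by simp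
  also have "\<dots> = (\<Prod>j\<in>J. if j \<in> K then y j else 1)"
    by (rule prod.cong) (auto simp: b_def)
  also have "\<dots> = (\<Prod>j\<in>K. y j)"
    using assms by (simp add: prod.If_cases Int_absorb1)
  finally show ?thesis .
qed

lemma mlin_eq:
  assumes "finite J" "vin J p"
  shows "mp_mlin_eval p y = multilin_rel J (mp_eval p) y"
proof -
  have "multilin_rel J (mp_eval p) y =
     (\<Sum>S\<in>Pow J. (\<Prod>j\<in>S. y j) * (\<Prod>j\<in>J - S. 1 - y j) *
        (\<Sum>m\<in>Poly_Mapping.keys p. Poly_Mapping.lookup p m * (if Poly_Mapping.keys m \<subseteq> S then 1 else 0)))"
    unfolding multilin_rel_def mp_eval_def mv_def[symmetric] mv_ind by simp
  also have "\<dots> = (\<Sum>m\<in>Poly_Mapping.keys p. Poly_Mapping.lookup p m *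
       (\<Sum>S\<in>Pow J. (\<Prod>j\<in>S. y j) * (\<Prod>j\<in>J - S. 1 - y j) * (if Poly_Mapping.keys m \<subseteq> S then 1 else 0)))"
    by (simp add: sum_distrib_left sum_distrib_right mult_ac) (subst sum.swap, simp add: mult_ac)
  also have "\<dots> = (\<Sum>m\<in>Poly_Mapping.keys p. Poly_Mapping.lookup p m * (\<Prod>j\<in>Poly_Mapping.keys m. y j))"
    using assms by (intro sum.cong refl) (simp add: key_identity vin_def)
  finally show ?thesis by (simp add: mp_mlin_eval_def)
qed

lemma weight_split:
  fixes y :: "'j \<Rightarrow> real"
  assumes "j \<in> J" "S \<subseteq> J" and True: "finite J"
  shows "(\<Prod>i\<in>S. (y(j:=t)) i) * (\<Prod>i\<in>J-S. 1 - (y(j:=t)) i) =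
     (if j \<in> S then t else 1 - t) * ((\<Prod>i\<in>S-{j}. y i) * (\<Prod>i\<in>(J-S)-{j}. 1 - y i))"
proof -
  have fS: "finite S" using assms finite_subset by blast
  show ?thesis
  proof (cases "j \<in> S")
    case True
    have "(\<Prod>i\<in>S. (y(j:=t)) i) = t * (\<Prod>i\<in>S-{j}. (y(j:=t)) i)"
      using True fS by (simp add: prod.remove)
    also have "(\<Prod>i\<in>S-{j}. (y(j:=t)) i) = (\<Prod>i\<in>S-{j}. y i)" by (rule prod.cong) auto
    finally have 1: "(\<Prod>i\<in>S. (y(j:=t)) i) = t * (\<Prod>i\<in>S-{j}. y i)" .
    have 2: "(\<Prod>i\<in>J-S. 1 - (y(j:=t)) i) = (\<Prod>i\<in>J-S-{j}. 1 - y i)"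
      using True by (intro prod.cong) auto
    show ?thesis unfolding 1 2 using True by simp
  next
    case False
    then have jJS: "j \<in> J - S" using assms by auto
    have "(\<Prod>i\<in>J-S. 1 - (y(j:=t)) i) = (1 - t) * (\<Prod>i\<in>J-S-{j}. 1 - (y(j:=t)) i)"
      using jJS True by (simp add: prod.remove)
    also have "(\<Prod>i\<in>J-S-{j}. 1 - (y(j:=t)) i) = (\<Prod>i\<in>J-S-{j}. 1 - y i)" by (rule prod.cong) auto
    finally have "(\<Prod>i\<in>J-S. 1 - (y(j:=t)) i) = (1 - t) * (\<Prod>i\<in>J-S-{j}. 1 - y i)" .
    moreover have "(\<Prod>i\<in>S. (y(j:=t)) i) = (\<Prod>i\<in>S. y i)" using False by (intro prod.cong) auto
    ultimately show ?thesis using False by simp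
  qed
qed

lemma ml_affine:
  assumes "j \<in> J" "finite J"
  shows "multilin_rel J F (y(j:=t)) = t * multilin_rel J F (y(j:=1)) + (1 - t) * multilin_rel J F (y(j:=0))"
proof -
  have "multilin_rel J F (y(j:=s)) = (\<Sum>S\<in>Pow J. (if j \<in> S then s else 1 - s) *
      ((\<Prod>i\<in>S-{j}. y i) * (\<Prod>i\<in>(J-S)-{j}. 1 - y i)) * F (\<lambda>j. if j \<in> S then 1 else 0))" for s
    unfolding multilin_rel_def
  proof (intro sum.cong refl)
    fix S assume "S \<in> Pow J"
    then show "(\<Prod>i\<in>S. (y(j := s)) i) * (\<Prod>i\<in>J - S. 1 - (y(j := s)) i) * F (\<lambda>j. if j \<in> S then 1 else 0) =
         (if j \<in> S then s else 1 - s) * ((\<Prod>i\<in>S - {j}. y i) * (\<Prod>i\<in>J - S - {j}. 1 - y i)) * F (\<lambda>j. if j \<in> S then 1 else 0)"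
      using weight_split[OF assms(1) _ assms(2), of S y s] \<open>S \<in> Pow J\<close> by simp
  qed
  then show ?thesis
    by (simp add: sum_distrib_left sum.distrib[symmetric]) (intro sum.cong refl, simp add: algebra_simps)
qed

lemma partial_ml:
  assumes "j \<in> J" "finite J"
  shows "partial (multilin_rel J F) j y = multilin_rel J F (y(j:=1)) - multilin_rel J F (y(j:=0))"
proof -
  define a where "a = multilin_rel J F (y(j:=1))"
  define b where "b = multilin_rel J F (y(j:=0))"
  have e: "(\<lambda>t. multilin_rel J F (y(j:=t))) = (\<lambda>t. t * a + (1 - t) * b)"
    unfolding a_def b_def by (rule ext) (rule ml_affine[OF assms])
  have d: "((\<lambda>t. t * a + (1 - t) * b) has_real_derivative (a - b)) (at (y j))"
  proof -
    have "((\<lambda>t. t * a + (1 - t) * b) has_real_derivative (1 * a + (0 - 1) * b)) (at (y j))"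
      by (intro DERIV_add DERIV_cmult_right DERIV_ident DERIV_diff DERIV_const)
    then show ?thesis by simp
  qed
  have "partial (multilin_rel J F) j y = a - b"
    unfolding partial_def e by (rule DERIV_imp_deriv[OF d])
  then show ?thesis by (simp add: a_def b_def)
qed

lemma ml_diff: "multilin_rel J (\<lambda>x. F x - G x) y = multilin_rel J F y - multilin_rel J G y"
  unfolding multilin_rel_def by (simp add: algebra_simps sum_subtractf)

lemma ml_bounds:
  assumes "finite J" "\<And>j. j \<in> J \<Longrightarrow> 0 \<le> y j \<and> y j \<le> 1"
    and "\<And>S. S \<subseteq> J \<Longrightarrow> 0 \<le> F (\<lambda>j. if j \<in> S then 1 else 0) \<and> F (\<lambda>j. if j \<in> S then 1 else 0) \<le> B"
  shows "0 \<le> multilin_rel J F y \<and> multilin_rel J F y \<le> B"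
proof -
  define w where "w S = (\<Prod>j\<in>S. y j) * (\<Prod>j\<in>J - S. 1 - y j)" for S
  have wn: "w S \<ge> 0" if "S \<in> Pow J" for S
    using that assms(2) unfolding w_def by (intro mult_nonneg_nonneg prod_nonneg) auto
  have ws: "(\<Sum>S\<in>Pow J. w S) = 1"
    using prod_add[OF assms(1), of y "\<lambda>j. 1 - y j"] by (simp add: w_def)
  have "multilin_rel J F y = (\<Sum>S\<in>Pow J. w S * F (\<lambda>j. if j \<in> S then 1 else 0))"
    by (simp add: multilin_rel_def w_def)
  moreover have "(\<Sum>S\<in>Pow J. w S * F (\<lambda>j. if j \<in> S then 1 else 0)) \<le> (\<Sum>S\<in>Pow J. w S * B)"
    using wn assms(3) by (intro sum_mono mult_left_mono) auto
  moreover have "(\<Sum>S\<in>Pow J. w S * F (\<lambda>j. if j \<in> S then 1 else 0)) \<ge> 0"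
    using wn assms(3) by (intro sum_nonneg mult_nonneg_nonneg) auto
  moreover have "(\<Sum>S\<in>Pow J. w S * B) = B" using ws by (simp add: sum_distrib_right[symmetric])
  ultimately show ?thesis by simp
qed

definition rem :: "nat \<Rightarrow> real \<Rightarrow> real" where
  "rem L s = s ^ (L + 1) / (1 - s)"

lemma h_minus_hhat: "s \<noteq> 1 \<Longrightarrow> h s - h_hat L s = rem L s"
proof (induction L)
  case 0
  then show ?case by (simp add: h_def h_hat_def rem_def)
next
  case (Suc L)
  have "h_hat (Suc L) s = h_hat L s + s ^ Suc L"
    by (simp add: h_hat_def)
  moreover have "rem L s - s ^ Suc L = rem (Suc L) s"
    using Suc.prems by (simp add: rem_def field_simps)
  ultimately show ?case using Suc by simp
qed

lemma rem_mono: "0 \<le> a \<Longrightarrow> a \<le> b \<Longrightarrow> b < 1 \<Longrightarrow> rem L a \<le> rem L b"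
  unfolding rem_def by (rule frac_le) (auto intro: power_mono simp del: power_Suc)

lemma rem_nonneg: "0 \<le> a \<Longrightarrow> a < 1 \<Longrightarrow> 0 \<le> rem L a"
  unfolding rem_def by simp

lemma pos_lt:
  assumes "on_path p (v, u)"
  shows "pos p v < length p"
proof -
  obtain k where k: "Suc k < length p" "p ! k = v" using assms unfolding on_path_def by auto
  have "k < length p \<and> p ! k = v" using k by simp
  then have "pos p v \<le> k" unfolding pos_def by (rule Least_le)
  then show ?thesis using k by simp
qed

lemma load_poly_eval:
  "mp_eval (load_poly R item lam pth mu z) x = load R item lam pth mu z x"
proof -
  obtain u v where z: "z = (u, v)" by (cases z)
  show ?thesis
    unfolding z load_poly_def load_def
    by (simp add: mp_eval_sum mp_eval_mult mp_eval_prod mp_eval_diff sum_distrib_left)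
qed

lemma load_poly_vin:
  assumes "\<And>r. r \<in> R \<Longrightarrow> item r \<in> Cat"
    and "\<And>r. r \<in> R \<Longrightarrow> set (pth r) \<subseteq> V"
  shows "vin (V \<times> Cat) (load_poly R item lam pth mu z)"
proof -
  obtain u v where z: "z = (u, v)" by (cases z)
  show ?thesis
    unfolding z load_poly_def
  proof (simp only: prod.case, intro vin_sum vin_mult vin_const vin_prod vin_diff vin_one vin_var)
    fix r k' assume r: "r \<in> {r \<in> R. on_path (pth r) (v, u)}" and k: "k' \<in> {0..pos (pth r) v}"
    have "k' < length (pth r)" using pos_lt[of "pth r" v u] r k by auto
    then have "pth r ! k' \<in> V" using assms(2)[of r] r nth_mem by blast
    then show "(pth r ! k', item r) \<in> V \<times> Cat" using assms(1)[of r] r by auto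
  qed
qed

lemma load_bounds:
  assumes "mu z > 0" "\<And>r. r \<in> R \<Longrightarrow> lam r > 0" "\<And>i. 0 \<le> x i \<and> x i \<le> 1"
  shows "0 \<le> load R item lam pth mu z x \<and> load R item lam pth mu z x \<le> load R item lam pth mu z (\<lambda>_. 0)"
proof -
  obtain u v where z: "z = (u, v)" by (cases z)
  let ?A = "{r \<in> R. on_path (pth r) (v, u)}"
  let ?t = "\<lambda>r. lam r * (\<Prod>k'\<in>{0..pos (pth r) v}. 1 - x (pth r ! k', item r))"
  have t: "0 \<le> ?t r \<and> ?t r \<le> lam r" if "r \<in> ?A" for r
  proof -
    have "0 \<le> (\<Prod>k'\<in>{0..pos (pth r) v}. 1 - x (pth r ! k', item r))"
      using assms(3) by (intro prod_nonneg) (auto simp: algebra_simps)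
    moreover have "(\<Prod>k'\<in>{0..pos (pth r) v}. 1 - x (pth r ! k', item r)) \<le> 1"
      using assms(3) by (intro prod_le_1) (auto simp: algebra_simps)
    moreover have "lam r > 0" using that assms(2) by auto
    ultimately show ?thesis by (simp add: mult_left_le)
  qed
  have m: "1 / mu (u, v) > 0" using assms(1) z by simp
  have "0 \<le> sum ?t ?A" using t by (intro sum_nonneg) auto
  moreover have "sum ?t ?A \<le> sum lam ?A" using t by (intro sum_mono) auto
  ultimately show ?thesis
    unfolding z load_def using m by (auto intro: divide_right_mono)
qed

theorem theorem5:
  fixes V :: "'v set" and Cat :: "'c set" and E :: "('v \<times> 'v) set"
    and mu :: "'v \<times> 'v \<Rightarrow> real"
    and R :: "'r set" and item :: "'r \<Rightarrow> 'c" and lam :: "'r \<Rightarrow> real"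
    and pth :: "'r \<Rightarrow> 'v list"
    and L :: nat and z :: "'v \<times> 'v" and y :: "'v \<times> 'c \<Rightarrow> real"
  assumes finV: "finite V" and finC: "finite Cat" and E_sub: "E \<subseteq> V \<times> V"
    and mu_pos: "\<And>e. e \<in> E \<Longrightarrow> mu e > 0"
    and finR: "finite R"
    and item_in: "\<And>r. r \<in> R \<Longrightarrow> item r \<in> Cat"
    and lam_pos: "\<And>r. r \<in> R \<Longrightarrow> lam r > 0"
    and path_ne: "\<And>r. r \<in> R \<Longrightarrow> pth r \<noteq> []"
    and path_distinct: "\<And>r. r \<in> R \<Longrightarrow> distinct (pth r)"
    and path_nodes: "\<And>r. r \<in> R \<Longrightarrow> set (pth r) \<subseteq> V"
    and path_edges: "\<And>r k. r \<in> R \<Longrightarrow> Suc k < length (pth r) \<Longrightarrow>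
                       (pth r ! k, pth r ! Suc k) \<in> E"
    and load_lt1: "\<And>e. e \<in> E \<Longrightarrow> load R item lam pth mu e (\<lambda>_. 0) < 1"
    and z_in: "z \<in> E"
    and y_in: "\<And>j. j \<in> V \<times> Cat \<Longrightarrow> 0 \<le> y j \<and> y j \<le> 1"
  defines "sbar \<equiv> Max ((\<lambda>e. load R item lam pth mu e (\<lambda>_. 0)) ` E)"
  shows "L2_set (\<lambda>j.
            partial (multilin_rel (V \<times> Cat) (f_z R item lam pth mu z)) j y
          - (mp_mlin_eval (f_hat_poly R item lam pth mu L z) (y(j := 1))
             - mp_mlin_eval (f_hat_poly R item lam pth mu L z) (y(j := 0))))
          (V \<times> Cat)
         \<le> 2 * sqrt (real (card V * card Cat)) * sbar ^ (L + 1) / (1 - sbar)"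
proof -
  let ?J = "V \<times> Cat"
  let ?g = "load R item lam pth mu z"
  let ?F = "f_z R item lam pth mu z"
  let ?P = "f_hat_poly R item lam pth mu L z"
  have finJ: "finite ?J" using finV finC by simp
  have finE: "finite E" using E_sub finV by (meson finite_SigmaI finite_subset)
  have Ene: "E \<noteq> {}" using z_in by auto
  have muz: "mu z > 0" using mu_pos z_in by auto
  have g0_le: "?g (\<lambda>_. 0) \<le> sbar" unfolding sbar_def using finE z_in by (intro Max_ge) auto
  have "sbar \<in> (\<lambda>e. load R item lam pth mu e (\<lambda>_. 0)) ` E" unfolding sbar_def using finE Ene by (intro Max_in) auto
  then have sbar_lt: "sbar < 1" using load_lt1 by auto
  have gb: "0 \<le> ?g x \<and> ?g x \<le> ?g (\<lambda>_. 0)" if "\<And>i. 0 \<le> x i \<and> x i \<le> 1" for x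
    using load_bounds[of mu z R lam x item pth] muz lam_pos that by blast
  have g0_nn: "0 \<le> ?g (\<lambda>_. 0)" using gb[of "\<lambda>_. 0"] by simp
  have evalP: "mp_eval ?P x = h_hat L (?g (\<lambda>_. 0)) - h_hat L (?g x)" for x
    by (simp add: f_hat_poly_def mp_eval_diff mp_eval_sum mp_eval_power load_poly_eval h_hat_def)
  have vinP: "vin ?J ?P"
    unfolding f_hat_poly_def
    by (intro vin_diff vin_const vin_sum vin_power load_poly_vin[OF item_in path_nodes]) auto
  define B where "B = rem L sbar"
  define D where "D x = ?F x - mp_eval ?P x" for x
  have Db: "0 \<le> D x \<and> D x \<le> B" if "\<And>i. 0 \<le> x i \<and> x i \<le> 1" for x
  proof -
    have 1: "0 \<le> ?g x" "?g x \<le> ?g (\<lambda>_. 0)" using gb[OF that] by auto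
    have "D x = (h (?g (\<lambda>_. 0)) - h_hat L (?g (\<lambda>_. 0))) - (h (?g x) - h_hat L (?g x))"
      unfolding D_def f_z_def evalP by simp
    also have "\<dots> = rem L (?g (\<lambda>_. 0)) - rem L (?g x)"
      using 1 g0_le sbar_lt by (simp add: h_minus_hhat)
    finally have e: "D x = rem L (?g (\<lambda>_. 0)) - rem L (?g x)" .
    have "rem L (?g x) \<le> rem L (?g (\<lambda>_. 0))" using 1 g0_le sbar_lt by (intro rem_mono) auto
    moreover have "rem L (?g (\<lambda>_. 0)) \<le> B" unfolding B_def using g0_nn g0_le sbar_lt by (intro rem_mono) auto
    moreover have "0 \<le> rem L (?g x)" using 1 g0_le sbar_lt by (intro rem_nonneg) auto
    ultimately show ?thesis using e by simp
  qed
  have coord: "\<bar>partial (multilin_rel ?J ?F) j y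
          - (mp_mlin_eval ?P (y(j := 1)) - mp_mlin_eval ?P (y(j := 0)))\<bar> \<le> B" if j: "j \<in> ?J" for j
  proof -
    have e: "partial (multilin_rel ?J ?F) j y
          - (mp_mlin_eval ?P (y(j := 1)) - mp_mlin_eval ?P (y(j := 0)))
         = multilin_rel ?J D (y(j:=1)) - multilin_rel ?J D (y(j:=0))"
      unfolding partial_ml[OF j finJ] mlin_eq[OF finJ vinP] D_def ml_diff by simp
    have "0 \<le> multilin_rel ?J D (y(j:=c)) \<and> multilin_rel ?J D (y(j:=c)) \<le> B" if "c = 0 \<or> c = 1" for c
      using y_in that by (intro ml_bounds[OF finJ]) (auto intro!: Db)
    from this[of 0] this[of 1] show ?thesis unfolding e by auto
  qed
  have Bnn: "0 \<le> B" unfolding B_def using g0_nn g0_le sbar_lt by (intro rem_nonneg) auto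
  define f where "f j = partial (multilin_rel ?J ?F) j y
          - (mp_mlin_eval ?P (y(j := 1)) - mp_mlin_eval ?P (y(j := 0)))" for j
  have "L2_set f ?J = sqrt (\<Sum>j\<in>?J. (f j)^2)" by (simp add: L2_set_def)
  also have "\<dots> \<le> sqrt (\<Sum>j\<in>?J. B^2)"
  proof (intro real_sqrt_le_mono sum_mono)
    fix j assume "j \<in> ?J"
    then have "\<bar>f j\<bar> \<le> \<bar>B\<bar>" using coord Bnn unfolding f_def by auto
    then show "(f j)^2 \<le> B^2" by (simp add: abs_le_square_iff)
  qed
  also have "\<dots> = sqrt (real (card V * card Cat)) * B"
    using Bnn by (simp add: card_cartesian_product real_sqrt_mult)
  also have "\<dots> \<le> 2 * sqrt (real (card V * card Cat)) * B"
    using Bnn by simp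
  also have "\<dots> = 2 * sqrt (real (card V * card Cat)) * sbar ^ (L + 1) / (1 - sbar)"
    by (simp add: B_def rem_def)
  finally show ?thesis unfolding f_def .
qed

end
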